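(* Let $S\subseteq(0,1)$ be an open set having $0$ as a limit point, and let $f:S\to(0,1)$ be differentiable with $f'(p)=\Omega(f(p)/p)$ as $p\to 0$. Then every (possibly randomized) Bernoulli factory for $f$ that is fast satisfies $\mathbb E[N]=\Omega(f(p)/p)$ as $p\to0$; that is, there exist $C',\delta'>0$ such that $\mathbb E[N]\ge C' f(p)/p$ for all $p\in S\cap(0,\delta')$.
   Context: For positive functions $f_1,f_2$, $f_1(x)=\Omega(f_2(x))$ as $x\to x_0$ means there are constants $C,\delta>0$ with $f_1(x)\ge Cf_2(x)$ for all $x$ in the domain with $|x-x_0|<\delta$. Let $X=(X_i)$ be i.i.d. Bernoulli with parameter $p\in S$ and $U=(U_i)$ i.i.d. uniform on $(0,1)$, independent of $X$. A (possibly randomized) Bernoulli factory for $f$ consists of measurable stopping functions $\tau_i(x_1,u_1;\dots;x_i,u_i)\in\{0,1\}$ and measurable output functions $\gamma_n(x_1,u_1;\dots;x_n,u_n)\in\{0,1\}$; $N=\min\{i:\tau_i(X_1,U_1;\dots;X_i,U_i)=1\}$ is assumed finite almost surely, and the output $Y=\gamma_N(X_1,U_1;\dots;X_N,U_N)$ satisfies $\Pr[Y=1]=f(p)$ for all $p\in S$. The factory is fast if for every $p\in S$ there exist $A>0$, $\beta<1$ with $\Pr[N>n]\le A\beta^n$ for all $n$. *)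

theory Defs
  imports "HOL-Probability.Probability"
begin

text \<open>A sample point is a sequence (X_1,U_1),(X_2,U_2),... stored 0-based:
  omega i = (X_(i+1), U_(i+1)).\<close>

definition coin_space :: "real \<Rightarrow> (nat \<Rightarrow> bool \<times> real) measure" where
  "coin_space p = (\<Pi>\<^sub>M i\<in>UNIV.
      (measure_pmf (bernoulli_pmf p) \<Otimes>\<^sub>M uniform_measure lborel {0<..<1}))"

definition coin_sets :: "(nat \<Rightarrow> bool \<times> real) measure" where
  "coin_sets = (\<Pi>\<^sub>M i\<in>UNIV. (count_space UNIV \<Otimes>\<^sub>M lborel))"

definition depends_on_prefix :: "nat \<Rightarrow> ((nat \<Rightarrow> bool \<times> real) \<Rightarrow> bool) \<Rightarrow> bool" where
  "depends_on_prefix i g \<longleftrightarrow> (\<forall>\<omega> \<omega>'. (\<forall>j<i. \<omega> j = \<omega>' j) \<longrightarrow> g \<omega> = g \<omega>')"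

definition stop_time :: "(nat \<Rightarrow> (nat \<Rightarrow> bool \<times> real) \<Rightarrow> bool) \<Rightarrow> (nat \<Rightarrow> bool \<times> real) \<Rightarrow> nat" where
  "stop_time \<tau> \<omega> = (LEAST i. 0 < i \<and> \<tau> i \<omega>)"

definition factory_output ::
  "(nat \<Rightarrow> (nat \<Rightarrow> bool \<times> real) \<Rightarrow> bool) \<Rightarrow> (nat \<Rightarrow> (nat \<Rightarrow> bool \<times> real) \<Rightarrow> bool)
    \<Rightarrow> (nat \<Rightarrow> bool \<times> real) \<Rightarrow> bool" where
  "factory_output \<tau> \<gamma> \<omega> = \<gamma> (stop_time \<tau> \<omega>) \<omega>"

definition bernoulli_factory ::
  "real set \<Rightarrow> (real \<Rightarrow> real) \<Rightarrow> (nat \<Rightarrow> (nat \<Rightarrow> bool \<times> real) \<Rightarrow> bool)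
    \<Rightarrow> (nat \<Rightarrow> (nat \<Rightarrow> bool \<times> real) \<Rightarrow> bool) \<Rightarrow> bool" where
  "bernoulli_factory S f \<tau> \<gamma> \<longleftrightarrow>
     (\<forall>i>0. \<tau> i \<in> measurable coin_sets (count_space UNIV) \<and> depends_on_prefix i (\<tau> i)) \<and>
     (\<forall>n>0. \<gamma> n \<in> measurable coin_sets (count_space UNIV) \<and> depends_on_prefix n (\<gamma> n)) \<and>
     (\<forall>p\<in>S. (AE \<omega> in coin_space p. \<exists>i>0. \<tau> i \<omega>) \<and>
             measure (coin_space p) {\<omega>\<in>space (coin_space p). factory_output \<tau> \<gamma> \<omega>} = f p)"

definition fast_factory :: "real set \<Rightarrow> (nat \<Rightarrow> (nat \<Rightarrow> bool \<times> real) \<Rightarrow> bool) \<Rightarrow> bool" where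
  "fast_factory S \<tau> \<longleftrightarrow>
     (\<forall>p\<in>S. \<exists>A>0. \<exists>\<beta><1. \<forall>n.
        measure (coin_space p) {\<omega>\<in>space (coin_space p). stop_time \<tau> \<omega> > n} \<le> A * \<beta> ^ n)"

end

theory Submission imports Defs begin

definition Um :: "real measure" where "Um = uniform_measure lborel {0<..<1::real}"

lemma sets_Um[simp, measurable_cong]: "sets Um = sets lborel" by (simp add: Um_def)
lemma space_Um[simp]: "space Um = UNIV" by (simp add: Um_def)

lemma prob_Um: "prob_space Um"
  unfolding Um_def by (rule prob_space_uniform_measure) auto

lemma emeasure_Um: "A \<in> sets lborel \<Longrightarrow> emeasure Um A = emeasure lborel ({0<..<1} \<inter> A)"
  unfolding Um_def by (subst emeasure_uniform_measure) (auto simp: divide_ennreal_def)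

lemma emeasure_Um_Ico: "0 \<le> a \<Longrightarrow> a \<le> b \<Longrightarrow> b \<le> 1 \<Longrightarrow> emeasure Um {a..<b} = ennreal (b - a)"
proof -
  assume h: "0 \<le> a" "a \<le> b" "b \<le> 1"
  have "{0<..<1} \<inter> {a..<b} = (if a = 0 then {0<..<b} else {a..<b})" using h by auto
  then show ?thesis using h by (simp add: emeasure_Um)
qed

lemma emeasure_Um_lt: "0 \<le> p \<Longrightarrow> p \<le> 1 \<Longrightarrow> emeasure Um {v. v < p} = ennreal p"
proof -
  assume h: "0 \<le> p" "p \<le> 1"
  have "{0<..<1} \<inter> {v. v < p} = {0<..<p}" using h by auto
  then show ?thesis using h by (simp add: emeasure_Um)
qed

lemma distr_Um_bern: assumes "0 \<le> p" "p \<le> 1"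
  shows "distr Um (measure_pmf (bernoulli_pmf p)) (\<lambda>v. v < p) = measure_pmf (bernoulli_pmf p)"
proof (rule measure_eqI_finite[where A=UNIV])
  fix a :: bool
  interpret prob_space Um by (rule prob_Um)
  have m: "(\<lambda>v::real. v < p) \<in> measurable Um (measure_pmf (bernoulli_pmf p))" by simp
  show "emeasure (distr Um (measure_pmf (bernoulli_pmf p)) (\<lambda>v. v < p)) {a} = emeasure (measure_pmf (bernoulli_pmf p)) {a}"
  proof (cases a)
    case True
    have "(\<lambda>v. v < p) -` {a} \<inter> space Um = {v. v < p}" using True by auto
    then show ?thesis using True assms m by (simp add: emeasure_distr emeasure_Um_lt emeasure_pmf_single)
  next
    case False
    have "(\<lambda>v. v < p) -` {a} \<inter> space Um = UNIV - {v. v < p}" using False by auto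
    moreover have "emeasure Um (UNIV - {v. v < p}) = ennreal (1 - p)"
      using emeasure_compl[of "{v. v < p}" Um] assms emeasure_Um_lt[OF assms]
      by (simp add: emeasure_space_1 ennreal_minus del: space_Um) (use ennreal_minus[of p 1] in simp)
    ultimately show ?thesis using False assms m by (simp add: emeasure_distr emeasure_pmf_single)
  qed
qed auto

lemma distr_PiM_map:
  fixes M :: "nat \<Rightarrow> 'a measure" and N :: "nat \<Rightarrow> 'b measure"
  assumes PM: "\<And>i. prob_space (M i)" and PN: "\<And>i. prob_space (N i)"
    and g: "\<And>i. g i \<in> measurable (M i) (N i)" and d: "\<And>i. distr (M i) (N i) (g i) = N i"
  shows "distr (PiM UNIV M) (PiM UNIV N) (\<lambda>\<omega> i. g i (\<omega> i)) = PiM UNIV N"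
    (is "distr ?K ?I ?t = ?I")
proof (rule measure_eqI_PiM_infinite[symmetric, OF refl])
  have gs: "\<And>i x. x \<in> space (M i) \<Longrightarrow> g i x \<in> space (N i)" by (rule measurable_space[OF g])
  interpret prob_space ?I
    using PN by (intro prob_space_PiM) auto
  show "finite_measure ?I"
    by unfold_locales
  have tm: "?t \<in> measurable ?K ?I"
  proof (rule measurable_PiM_single')
    fix i :: nat
    have "(\<lambda>\<omega>. \<omega> i) \<in> measurable ?K (M i)" by (rule measurable_component_singleton) simp
    then show "(\<lambda>\<omega>. g i (\<omega> i)) \<in> measurable ?K (N i)" using g by (rule measurable_compose)
  qed (use gs in \<open>auto simp: space_PiM PiE_iff\<close>)
  fix A J assume J: "finite J" "J \<subseteq> (UNIV::nat set)" and A: "\<And>i. i \<in> J \<Longrightarrow> A i \<in> sets (N i)"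
  have "?I (prod_emb UNIV N J (Pi\<^sub>E J A)) = (\<Prod>j\<in>J. N j (A j))"
    using J A by (intro emeasure_PiM_emb PN) auto
  also have "\<dots> = (\<Prod>j\<in>J. M j (g j -` A j \<inter> space (M j)))"
    using A g by (intro prod.cong refl) (metis d emeasure_distr)
  also have "\<dots> = ?K (prod_emb UNIV M J (\<Pi>\<^sub>E j\<in>J. g j -` A j \<inter> space (M j)))"
    using J A g by (intro emeasure_PiM_emb[symmetric] PM) (auto intro: measurable_sets)
  also have "prod_emb UNIV M J (\<Pi>\<^sub>E j\<in>J. g j -` A j \<inter> space (M j)) = ?t -` prod_emb UNIV N J (Pi\<^sub>E J A) \<inter> space ?K"
    using J A g gs by (auto simp: prod_emb_def space_PiM Pi_iff PiE_iff)
  also have "?K \<dots> = distr ?K ?I ?t (prod_emb UNIV N J (Pi\<^sub>E J A))"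
    using J A tm by (intro emeasure_distr[symmetric] sets_PiM_I) (auto simp: Pi_iff)
  finally show "?I (prod_emb UNIV N J (Pi\<^sub>E J A)) = distr ?K ?I ?t (prod_emb UNIV N J (Pi\<^sub>E J A))" .
qed simp

definition Bp :: "real \<Rightarrow> (bool \<times> real) measure" where
  "Bp p = measure_pmf (bernoulli_pmf p) \<Otimes>\<^sub>M Um"

lemma coin_space_Bp: "coin_space p = PiM UNIV (\<lambda>_. Bp p)"
  unfolding coin_space_def Bp_def Um_def ..

lemma distr_Bp: assumes "0 \<le> p" "p \<le> 1"
  shows "distr (Um \<Otimes>\<^sub>M Um) (Bp p) (\<lambda>(v,u). (v < p, u)) = Bp p"
proof -
  interpret prob_space Um by (rule prob_Um)
  have "distr (Um \<Otimes>\<^sub>M Um) (Bp p) (\<lambda>(v,u). (v < p, u)) =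
        distr (Um \<Otimes>\<^sub>M Um) (measure_pmf (bernoulli_pmf p) \<Otimes>\<^sub>M Um) (\<lambda>(v,u). (v < p, id u))"
    unfolding Bp_def by simp
  also have "\<dots> = distr Um (measure_pmf (bernoulli_pmf p)) (\<lambda>v. v < p) \<Otimes>\<^sub>M distr Um Um id"
    by (rule pair_measure_distr[symmetric]) (auto simp: distr_id intro: prob_space_imp_sigma_finite prob_Um)
  also have "\<dots> = Bp p" using distr_Um_bern[OF assms] distr_id[of Um] by (simp add: id_def Bp_def)
  finally show ?thesis .
qed

lemma prob_Bp: "prob_space (Bp p)"
  unfolding Bp_def by (intro prob_space_pair prob_Um prob_space_measure_pmf)

definition W :: "(nat \<Rightarrow> real \<times> real) measure" where
  "W = PiM UNIV (\<lambda>_. Um \<Otimes>\<^sub>M Um)"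

definition phi :: "real \<Rightarrow> (nat \<Rightarrow> real \<times> real) \<Rightarrow> (nat \<Rightarrow> bool \<times> real)" where
  "phi p \<omega> = (\<lambda>i. (fst (\<omega> i) < p, snd (\<omega> i)))"

lemma prob_W: "prob_space W"
  unfolding W_def by (intro prob_space_PiM prob_space_pair prob_Um)

lemma phi_meas: "phi p \<in> measurable W (coin_space p)"
  unfolding phi_def W_def coin_space_Bp
  by (rule measurable_PiM_single') (auto simp: Bp_def space_PiM space_pair_measure)

lemma distr_W: assumes "0 \<le> p" "p \<le> 1"
  shows "distr W (coin_space p) (phi p) = coin_space p"
proof -
  have "distr W (coin_space p) (phi p) = distr W (coin_space p) (\<lambda>\<omega> i. (\<lambda>(v,u). (v < p, u)) (\<omega> i))"
    unfolding phi_def by (simp add: case_prod_beta)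
  also have "\<dots> = coin_space p"
    unfolding W_def coin_space_Bp
  proof (rule distr_PiM_map)
    show "prob_space (Bp p)" for i :: nat by (rule prob_Bp)
    show "distr (Um \<Otimes>\<^sub>M Um) (Bp p) (\<lambda>(v,u). (v < p, u)) = Bp p" for i :: nat by (rule distr_Bp[OF assms])
    show "(\<lambda>(v,u). (v < p, u)) \<in> measurable (Um \<Otimes>\<^sub>M Um) (Bp p)" for i :: nat
      unfolding Bp_def by simp
  qed (auto intro: prob_space_pair prob_Um)
  finally show ?thesis .
qed


lemma sets_coin: "sets (coin_space p) = sets coin_sets"
  unfolding coin_space_def coin_sets_def
  by (intro sets_PiM_cong refl sets_pair_measure_cong) auto

lemma space_coin: "space (coin_space p) = UNIV"
  unfolding coin_space_def by (simp add: space_PiM space_pair_measure)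

lemma space_coin_sets: "space coin_sets = UNIV"
  unfolding coin_sets_def by (simp add: space_PiM space_pair_measure)

lemma space_W: "space W = UNIV"
  unfolding W_def by (simp add: space_PiM space_pair_measure)

locale fac =
  fixes \<tau> \<gamma> :: "nat \<Rightarrow> (nat \<Rightarrow> bool \<times> real) \<Rightarrow> bool"
  assumes tm: "\<forall>i>0. \<tau> i \<in> measurable coin_sets (count_space UNIV) \<and> depends_on_prefix i (\<tau> i)"
  and gm: "\<forall>n>0. \<gamma> n \<in> measurable coin_sets (count_space UNIV) \<and> depends_on_prefix n (\<gamma> n)"
begin

definition T where "T i x \<longleftrightarrow> 0 < i \<and> \<tau> i x"
definition G where "G i x \<longleftrightarrow> 0 < i \<and> \<gamma> i x"
definition Yo where "Yo x \<longleftrightarrow> (\<exists>n. T n x \<and> (\<forall>i<n. \<not> T i x) \<and> G n x)"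
definition Bc where "Bc j x \<longleftrightarrow> (\<forall>i\<le>j. \<not> T i x)"

lemma T_meas[measurable]: "T i \<in> measurable coin_sets (count_space UNIV)"
proof (cases "0 < i")
  case True then show ?thesis using tm unfolding T_def by simp
next
  case False then show ?thesis unfolding T_def by simp
qed

lemma G_meas[measurable]: "G i \<in> measurable coin_sets (count_space UNIV)"
proof (cases "0 < i")
  case True then show ?thesis using gm unfolding G_def by simp
next
  case False then show ?thesis unfolding G_def by simp
qed

lemma Yo_meas[measurable]: "Yo \<in> measurable coin_sets (count_space UNIV)"
  unfolding Yo_def by measurable

lemma Bc_meas[measurable]: "Bc j \<in> measurable coin_sets (count_space UNIV)"
  unfolding Bc_def by measurable

lemma T_dep: "(\<forall>k<i. x k = x' k) \<Longrightarrow> T i x = T i x'"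
  using tm unfolding T_def depends_on_prefix_def by blast

lemma G_dep: "(\<forall>k<i. x k = x' k) \<Longrightarrow> G i x = G i x'"
  using gm unfolding G_def depends_on_prefix_def by blast

lemma Yo_first: "T n x \<Longrightarrow> (\<forall>i<n. \<not> T i x) \<Longrightarrow> Yo x = G n x"
  unfolding Yo_def by (metis linorder_neqE_nat)

lemma Yo_diff:
  assumes "Yo x \<noteq> Yo x'"
  shows "\<exists>j. Bc j x \<and> x j \<noteq> x' j"
proof (rule ccontr)
  assume H: "\<not> (\<exists>j. Bc j x \<and> x j \<noteq> x' j)"
  show False
  proof (cases "\<exists>n. T n x")
    case True
    define n where "n = (LEAST n. T n x)"
    have Tn: "T n x" unfolding n_def using True by (rule LeastI_ex)
    have lt: "\<forall>i<n. \<not> T i x" unfolding n_def using not_less_Least by blast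
    have agree: "\<forall>k<n. x k = x' k"
      using H lt unfolding Bc_def by (meson le_less_trans)
    have "\<forall>i\<le>n. T i x = T i x'"
      using agree by (intro allI impI T_dep) auto
    then have Tn': "T n x'" and lt': "\<forall>i<n. \<not> T i x'" using Tn lt by auto
    have "Yo x = G n x" by (rule Yo_first[OF Tn lt])
    moreover have "Yo x' = G n x'" by (rule Yo_first[OF Tn' lt'])
    moreover have "G n x = G n x'" using agree by (rule G_dep)
    ultimately show False using assms by simp
  next
    case False
    then have "x = x'" using H unfolding Bc_def by auto
    then show False using assms by simp
  qed
qed

end

lemma indep_split:
  fixes R :: "(nat \<Rightarrow> real \<times> real) \<Rightarrow> bool" and j :: nat
  assumes Rm: "R \<in> measurable W (count_space UNIV)"
    and Rind: "\<And>\<omega> x. R (fun_upd \<omega> j x) = R \<omega>"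
    and ab: "0 \<le> a" "a \<le> b" "b \<le> 1"
  shows "emeasure W {\<omega>\<in>space W. R \<omega> \<and> fst (\<omega> j) \<in> {a..<b}} = emeasure W {\<omega>\<in>space W. R \<omega>} * ennreal (b - a)"
proof -
  define Q where "Q = Um \<Otimes>\<^sub>M Um"
  define P' where "P' = PiM (UNIV - {j}) (\<lambda>_. Q)"
  define h where "h = (\<lambda>(x, X). X(j:=x) :: nat \<Rightarrow> real \<times> real)"
  have PQ: "prob_space Q" unfolding Q_def by (intro prob_space_pair prob_Um)
  have PP': "prob_space P'" unfolding P'_def by (intro prob_space_PiM PQ)
  have sQ: "space Q = UNIV" unfolding Q_def by (simp add: space_pair_measure)
  have W': "W = PiM (insert j (UNIV - {j})) (\<lambda>_. Q)" unfolding W_def Q_def by (simp add: insert_absorb)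
  have d: "distr (Q \<Otimes>\<^sub>M P') W h = W"
    unfolding W' P'_def h_def by (rule distr_pair_PiM_eq_PiM) (use PQ in auto)
  have hm: "h \<in> measurable (Q \<Otimes>\<^sub>M P') W"
    unfolding W'
  proof (rule measurable_PiM_single')
    fix i :: nat
    show "(\<lambda>\<omega>. h \<omega> i) \<in> measurable (Q \<Otimes>\<^sub>M P') Q"
    proof (cases "i = j")
      case True
      then have "(\<lambda>\<omega>. h \<omega> i) = fst" unfolding h_def by auto
      then show ?thesis by simp
    next
      case False
      then have e: "(\<lambda>\<omega>. h \<omega> i) = (\<lambda>\<omega>. snd \<omega> i)" unfolding h_def by auto
      have "(\<lambda>X. X i) \<in> measurable P' Q" unfolding P'_def
        by (rule measurable_component_singleton) (use False in auto)
      then show ?thesis unfolding e by simp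
    qed
  qed (auto simp: sQ)
  define e0 where "e0 = (\<lambda>X::nat \<Rightarrow> real \<times> real. X(j:=(0,0)))"
  have e0m: "e0 \<in> measurable P' W"
    unfolding W'
  proof (rule measurable_PiM_single')
    fix i :: nat
    show "(\<lambda>\<omega>. e0 \<omega> i) \<in> measurable P' Q"
    proof (cases "i = j")
      case True
      then have "(\<lambda>\<omega>. e0 \<omega> i) = (\<lambda>_. (0,0))" unfolding e0_def by auto
      then show ?thesis by (simp add: sQ)
    next
      case False
      then have e: "(\<lambda>\<omega>. e0 \<omega> i) = (\<lambda>\<omega>. \<omega> i)" unfolding e0_def by auto
      show ?thesis unfolding e P'_def
        by (rule measurable_component_singleton) (use False in auto)
    qed
  qed (auto simp: sQ)
  define R'' where "R'' = {X \<in> space P'. R (e0 X)}"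
  have R''s: "R'' \<in> sets P'"
    unfolding R''_def using e0m Rm by measurable
  have sW: "space W = UNIV" by (rule space_W)
  have RW: "{\<omega>\<in>space W. R \<omega>} \<in> sets W" using Rm by measurable
  have RCW: "{\<omega>\<in>space W. R \<omega> \<and> fst (\<omega> j) \<in> {a..<b}} \<in> sets W"
    using Rm unfolding W_def by measurable
  have key: "R (X(j:=x)) = R (e0 X)" for X x
    by (metis Rind e0_def fun_upd_upd)
  have pre1: "h -` {\<omega>\<in>space W. R \<omega> \<and> fst (\<omega> j) \<in> {a..<b}} \<inter> space (Q \<Otimes>\<^sub>M P') = ({a..<b} \<times> UNIV) \<times> R''"
    unfolding R''_def h_def by (auto simp: key space_pair_measure sQ sW)
  have pre2: "h -` {\<omega>\<in>space W. R \<omega>} \<inter> space (Q \<Otimes>\<^sub>M P') = space Q \<times> R''"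
    unfolding R''_def h_def by (auto simp: key space_pair_measure sQ sW)
  interpret P': prob_space P' by (rule PP')
  interpret Q: prob_space Q by (rule PQ)
  have EQ: "emeasure Q ({a..<b} \<times> UNIV) = ennreal (b - a)"
  proof -
    interpret U: prob_space Um by (rule prob_Um)
    have "emeasure Q ({a..<b} \<times> UNIV) = emeasure Um {a..<b} * emeasure Um (space Um)"
      unfolding Q_def by (subst U.emeasure_pair_measure_Times) auto
    then show ?thesis using ab using U.emeasure_space_1 by (simp add: emeasure_Um_Ico)
  qed
  have "emeasure W {\<omega>\<in>space W. R \<omega> \<and> fst (\<omega> j) \<in> {a..<b}} = emeasure (Q \<Otimes>\<^sub>M P') (({a..<b} \<times> UNIV) \<times> R'')"
    using emeasure_distr[OF hm RCW] d pre1 by simp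
  also have "\<dots> = ennreal (b - a) * emeasure P' R''"
    using R''s EQ by (subst P'.emeasure_pair_measure_Times) (auto simp: Q_def)
  finally have 1: "emeasure W {\<omega>\<in>space W. R \<omega> \<and> fst (\<omega> j) \<in> {a..<b}} = ennreal (b - a) * emeasure P' R''" .
  have "emeasure W {\<omega>\<in>space W. R \<omega>} = emeasure (Q \<Otimes>\<^sub>M P') (space Q \<times> R'')"
    using emeasure_distr[OF hm RW] d pre2 by simp
  also have "\<dots> = emeasure P' R''"
    using R''s by (subst P'.emeasure_pair_measure_Times) (auto simp: Q.emeasure_space_1)
  finally show ?thesis using 1 by (simp add: mult.commute)
qed


context fac begin

lemma T_meas_c[measurable]: "T i \<in> measurable (coin_space p) (count_space UNIV)"
  using T_meas measurable_cong_sets[OF sets_coin refl] by blast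
lemma G_meas_c[measurable]: "G i \<in> measurable (coin_space p) (count_space UNIV)"
  using G_meas measurable_cong_sets[OF sets_coin refl] by blast
lemma Yo_meas_c[measurable]: "Yo \<in> measurable (coin_space p) (count_space UNIV)"
  using Yo_meas measurable_cong_sets[OF sets_coin refl] by blast
lemma Bc_meas_c[measurable]: "Bc j \<in> measurable (coin_space p) (count_space UNIV)"
  using Bc_meas measurable_cong_sets[OF sets_coin refl] by blast

lemma stop_T: "stop_time \<tau> x = (LEAST i. T i x)"
  unfolding stop_time_def T_def ..

lemma stop_meas[measurable]: "stop_time \<tau> \<in> measurable (coin_space p) (count_space UNIV)"
  unfolding stop_T[abs_def] by measurable

lemma out_eq: assumes "\<exists>i>0. \<tau> i x" shows "factory_output \<tau> \<gamma> x = Yo x"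
proof -
  have ex: "\<exists>n. T n x" using assms unfolding T_def by auto
  define n where "n = (LEAST n. T n x)"
  have Tn: "T n x" unfolding n_def using ex by (rule LeastI_ex)
  have lt: "\<forall>i<n. \<not> T i x" unfolding n_def using not_less_Least by blast
  have "Yo x = G n x" by (rule Yo_first[OF Tn lt])
  moreover have "n > 0" using Tn unfolding T_def by simp
  ultimately show ?thesis unfolding factory_output_def stop_T n_def[symmetric] G_def by simp
qed

lemma L4:
  assumes ae: "AE x in coin_space p. \<exists>i>0. \<tau> i x"
    and nz: "measure (coin_space p) {x\<in>space (coin_space p). factory_output \<tau> \<gamma> x} \<noteq> 0"
  shows "measure (coin_space p) {x\<in>space (coin_space p). factory_output \<tau> \<gamma> x}
       = measure (coin_space p) {x\<in>space (coin_space p). Yo x}"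
proof -
  have s: "{x\<in>space (coin_space p). factory_output \<tau> \<gamma> x} \<in> sets (coin_space p)"
    using nz measure_notin_sets by blast
  have "emeasure (coin_space p) {x\<in>space (coin_space p). factory_output \<tau> \<gamma> x}
       = emeasure (coin_space p) {x\<in>space (coin_space p). Yo x}"
    by (rule emeasure_eq_AE) (use ae s out_eq in auto)
  then show ?thesis unfolding measure_def by simp
qed

lemma L4': assumes "0 \<le> p" "p \<le> 1"
  shows "measure (coin_space p) {x\<in>space (coin_space p). Yo x} = measure W {\<omega>\<in>space W. Yo (phi p \<omega>)}"
proof -
  have "measure (coin_space p) {x\<in>space (coin_space p). Yo x} =
        measure (distr W (coin_space p) (phi p)) {x\<in>space (coin_space p). Yo x}"
    using distr_W[OF assms] by simp
  also have "\<dots> = measure W (phi p -` {x\<in>space (coin_space p). Yo x} \<inter> space W)"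
    by (rule measure_distr[OF phi_meas]) measurable
  also have "phi p -` {x\<in>space (coin_space p). Yo x} \<inter> space W = {\<omega>\<in>space W. Yo (phi p \<omega>)}"
    by (auto simp: space_coin)
  finally show ?thesis .
qed

lemma emeasure_Bc_W: assumes "0 \<le> p" "p \<le> 1"
  shows "emeasure (coin_space p) {x\<in>space (coin_space p). Bc j x} = emeasure W {\<omega>\<in>space W. Bc j (phi p \<omega>)}"
proof -
  have "emeasure (coin_space p) {x\<in>space (coin_space p). Bc j x} =
        emeasure (distr W (coin_space p) (phi p)) {x\<in>space (coin_space p). Bc j x}"
    using distr_W[OF assms] by simp
  also have "\<dots> = emeasure W (phi p -` {x\<in>space (coin_space p). Bc j x} \<inter> space W)"
    by (rule emeasure_distr[OF phi_meas]) measurable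
  also have "phi p -` {x\<in>space (coin_space p). Bc j x} \<inter> space W = {\<omega>\<in>space W. Bc j (phi p \<omega>)}"
    by (auto simp: space_coin)
  finally show ?thesis .
qed

lemma of_nat_suminf: "(of_nat n :: ennreal) = (\<Sum>j. indicator {..<n} j)"
proof -
  have "(\<Sum>j. indicator {..<n} j :: ennreal) = (\<Sum>j<n. indicator {..<n} j)"
    by (rule suminf_finite) auto
  also have "\<dots> = of_nat n" by simp
  finally show ?thesis by simp
qed

lemma L3: assumes ae: "AE x in coin_space p. \<exists>i>0. \<tau> i x"
  shows "(\<integral>\<^sup>+ x. of_nat (stop_time \<tau> x) \<partial>coin_space p) = (\<Sum>j. emeasure (coin_space p) {x\<in>space (coin_space p). Bc j x})"
proof -
  have "(\<integral>\<^sup>+ x. of_nat (stop_time \<tau> x) \<partial>coin_space p) = (\<integral>\<^sup>+ x. (\<Sum>j. indicator {x. j < stop_time \<tau> x} x) \<partial>coin_space p)"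
    by (intro nn_integral_cong) (simp add: of_nat_suminf indicator_def)
  also have "\<dots> = (\<Sum>j. \<integral>\<^sup>+ x. indicator {x. j < stop_time \<tau> x} x \<partial>coin_space p)"
    by (rule nn_integral_suminf) measurable
  also have "\<dots> = (\<Sum>j. emeasure (coin_space p) {x\<in>space (coin_space p). Bc j x})"
  proof (rule suminf_cong)
    fix j
    have m: "{x. j < stop_time \<tau> x} \<in> sets (coin_space p)"
    proof -
      have "{x. j < stop_time \<tau> x} = {x\<in>space (coin_space p). j < stop_time \<tau> x}" by (simp add: space_coin)
      also have "\<dots> \<in> sets (coin_space p)" by measurable
      finally show ?thesis .
    qed
    have eqv: "j < stop_time \<tau> x \<longleftrightarrow> Bc j x" if "\<exists>i>0. \<tau> i x" for x
    proof -
      have ex: "\<exists>n. T n x" using that unfolding T_def by auto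
      show ?thesis unfolding stop_T Bc_def
        by (metis ex LeastI_ex not_less_Least le_less_trans not_le Least_le)
    qed
    have "(\<integral>\<^sup>+ x. indicator {x. j < stop_time \<tau> x} x \<partial>coin_space p) = emeasure (coin_space p) {x. j < stop_time \<tau> x}"
      using m by simp
    also have "\<dots> = emeasure (coin_space p) {x\<in>space (coin_space p). Bc j x}"
    proof (rule emeasure_eq_AE)
      show "{x\<in>space (coin_space p). Bc j x} \<in> sets (coin_space p)" by measurable
    qed (use ae eqv m in \<open>auto simp: space_coin\<close>)
    finally show "(\<integral>\<^sup>+ x. indicator {x. j < stop_time \<tau> x} x \<partial>coin_space p) = emeasure (coin_space p) {x\<in>space (coin_space p). Bc j x}" .
  qed
  finally show ?thesis .
qed

end

declare phi_meas[measurable]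

context fac begin

lemma Bc_dep: "(\<forall>k<j. x k = x' k) \<Longrightarrow> Bc j x = Bc j x'"
  unfolding Bc_def using T_dep by (metis order.strict_trans2)

lemma Lip:
  assumes p: "0 \<le> p" "p \<le> 1" and q: "0 \<le> q" "q \<le> 1"
    and ae: "AE x in coin_space p. \<exists>i>0. \<tau> i x"
  shows "ennreal \<bar>measure W {\<omega>\<in>space W. Yo (phi p \<omega>)} - measure W {\<omega>\<in>space W. Yo (phi q \<omega>)}\<bar>
       \<le> (\<integral>\<^sup>+ x. of_nat (stop_time \<tau> x) \<partial>coin_space p) * ennreal \<bar>p - q\<bar>"
proof -
  interpret prob_space W by (rule prob_W)
  define A where "A = {\<omega>\<in>space W. Yo (phi p \<omega>)}"
  define B where "B = {\<omega>\<in>space W. Yo (phi q \<omega>)}"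
  define D where "D = {\<omega>\<in>space W. Yo (phi p \<omega>) \<noteq> Yo (phi q \<omega>)}"
  define a where "a = min p q"
  define b where "b = max p q"
  define E where "E = (\<lambda>j. {\<omega>\<in>space W. Bc j (phi p \<omega>) \<and> fst (\<omega> j) \<in> {a..<b}})"
  have As: "A \<in> sets W" unfolding A_def by measurable
  have Bs: "B \<in> sets W" unfolding B_def by measurable
  have Ds: "D \<in> sets W" unfolding D_def by measurable
  have cj: "(\<lambda>\<omega>. fst (\<omega> j)) \<in> borel_measurable W" for j
  proof -
    have "(\<lambda>\<omega>. \<omega> j) \<in> measurable W (Um \<Otimes>\<^sub>M Um)" unfolding W_def
      by (rule measurable_component_singleton) simp
    then have "(\<lambda>\<omega>. fst (\<omega> j)) \<in> measurable W Um" by (rule measurable_compose) simp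
    then show ?thesis using measurable_cong_sets[of W W Um borel] by simp
  qed
  have Es: "E j \<in> sets W" for j unfolding E_def using cj[of j] by measurable
  have "measure W A \<le> measure W (B \<union> D)"
    by (rule finite_measure_mono) (use Bs Ds in \<open>auto simp: A_def B_def D_def\<close>)
  also have "\<dots> \<le> measure W B + measure W D" by (rule measure_Un_le[OF Bs Ds])
  finally have 1: "measure W A \<le> measure W B + measure W D" .
  have "measure W B \<le> measure W (A \<union> D)"
    by (rule finite_measure_mono) (use As Ds in \<open>auto simp: A_def B_def D_def\<close>)
  also have "\<dots> \<le> measure W A + measure W D" by (rule measure_Un_le[OF As Ds])
  finally have 2: "measure W B \<le> measure W A + measure W D" .
  have "ennreal \<bar>measure W A - measure W B\<bar> \<le> ennreal (measure W D)"
    using 1 2 by (intro ennreal_leI) linarith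
  also have "\<dots> = emeasure W D" by (simp add: emeasure_eq_measure)
  also have "\<dots> \<le> emeasure W (\<Union>j. E j)"
  proof (rule emeasure_mono)
    show "D \<subseteq> (\<Union>j. E j)"
    proof
      fix \<omega> assume "\<omega> \<in> D"
      then have "Yo (phi p \<omega>) \<noteq> Yo (phi q \<omega>)" unfolding D_def by auto
      then obtain j where j: "Bc j (phi p \<omega>)" "phi p \<omega> j \<noteq> phi q \<omega> j" using Yo_diff by blast
      then have "(fst (\<omega> j) < p) \<noteq> (fst (\<omega> j) < q)" unfolding phi_def by auto
      then have "fst (\<omega> j) \<in> {a..<b}" unfolding a_def b_def by auto
      then show "\<omega> \<in> (\<Union>j. E j)" using j unfolding E_def by (auto simp: space_W)
    qed
  qed (use Es in auto)
  also have "\<dots> \<le> (\<Sum>j. emeasure W (E j))"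
    by (rule emeasure_subadditive_countably) (use Es in auto)
  also have "\<dots> = (\<Sum>j. emeasure W {\<omega>\<in>space W. Bc j (phi p \<omega>)} * ennreal (b - a))"
  proof (rule suminf_cong)
    fix j
    show "emeasure W (E j) = emeasure W {\<omega>\<in>space W. Bc j (phi p \<omega>)} * ennreal (b - a)"
      unfolding E_def
    proof (rule indep_split)
      show "(\<lambda>\<omega>. Bc j (phi p \<omega>)) \<in> measurable W (count_space UNIV)" by measurable
      show "Bc j (phi p (fun_upd \<omega> j x)) = Bc j (phi p \<omega>)" for \<omega> x
        by (rule Bc_dep) (auto simp: phi_def)
    qed (use p q in \<open>auto simp: a_def b_def\<close>)
  qed
  also have "\<dots> = (\<Sum>j. emeasure W {\<omega>\<in>space W. Bc j (phi p \<omega>)}) * ennreal (b - a)"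
    by simp
  also have "(\<Sum>j. emeasure W {\<omega>\<in>space W. Bc j (phi p \<omega>)}) = (\<integral>\<^sup>+ x. of_nat (stop_time \<tau> x) \<partial>coin_space p)"
    using L3[OF ae] emeasure_Bc_W[OF p] by simp
  also have "b - a = \<bar>p - q\<bar>" unfolding a_def b_def by auto
  finally show ?thesis unfolding A_def B_def .
qed

end

theorem theorem4:
  fixes S :: "real set" and f :: "real \<Rightarrow> real"
    and \<tau> \<gamma> :: "nat \<Rightarrow> (nat \<Rightarrow> bool \<times> real) \<Rightarrow> bool"
  assumes S_sub: "S \<subseteq> {0<..<1}" and S_open: "open S" and S_lim: "0 islimpt S"
    and f_range: "f ` S \<subseteq> {0<..<1}"
    and f_diff: "\<forall>p\<in>S. f differentiable (at p)"
    and f_deriv: "\<exists>C>0. \<exists>\<delta>>0. \<forall>p\<in>S. p < \<delta> \<longrightarrow> deriv f p \<ge> C * (f p / p)"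
    and factory: "bernoulli_factory S f \<tau> \<gamma>"
    and fast: "fast_factory S \<tau>"
  shows "\<exists>C'>0. \<exists>\<delta>'>0. \<forall>p\<in>S. p < \<delta>' \<longrightarrow>
           ennreal (C' * (f p / p)) \<le> (\<integral>\<^sup>+ \<omega>. of_nat (stop_time \<tau> \<omega>) \<partial>coin_space p)"
proof -
  obtain C \<delta> where C: "C > 0" "\<delta> > 0" and Cd: "\<forall>p\<in>S. p < \<delta> \<longrightarrow> deriv f p \<ge> C * (f p / p)"
    using f_deriv by blast
  interpret fac \<tau> \<gamma> using factory unfolding bernoulli_factory_def fac_def by blast
  have ae: "AE x in coin_space r. \<exists>i>0. \<tau> i x" if "r \<in> S" for r
    using factory that unfolding bernoulli_factory_def by blast
  have fW: "f r = measure W {\<omega>\<in>space W. Yo (phi r \<omega>)}" if r: "r \<in> S" for r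
  proof -
    have fm: "measure (coin_space r) {x\<in>space (coin_space r). factory_output \<tau> \<gamma> x} = f r"
      using factory r unfolding bernoulli_factory_def by blast
    have "f r > 0" using f_range r by auto
    then have "measure (coin_space r) {x\<in>space (coin_space r). factory_output \<tau> \<gamma> x} \<noteq> 0"
      using fm by simp
    from L4[OF ae[OF r] this] fm have "f r = measure (coin_space r) {x\<in>space (coin_space r). Yo x}" by simp
    also have "\<dots> = measure W {\<omega>\<in>space W. Yo (phi r \<omega>)}"
      using S_sub r by (intro L4') auto
    finally show ?thesis .
  qed
  have main: "ennreal (C * (f p / p)) \<le> (\<integral>\<^sup>+ \<omega>. of_nat (stop_time \<tau> \<omega>) \<partial>coin_space p)"
    if p: "p \<in> S" "p < \<delta>" for p
  proof (cases "(\<integral>\<^sup>+ \<omega>. of_nat (stop_time \<tau> \<omega>) \<partial>coin_space p)" rule: ennreal_cases)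
    case top
    then show ?thesis by simp
  next
    case (real e)
    have lip: "\<bar>f q - f p\<bar> \<le> e * \<bar>q - p\<bar>" if q: "q \<in> S" for q
    proof -
      have "ennreal \<bar>f p - f q\<bar> \<le> ennreal e * ennreal \<bar>p - q\<bar>"
        using Lip[of p q, OF _ _ _ _ ae[OF p(1)]] p(1) q S_sub real fW[OF p(1)] fW[OF q]
        by (auto simp: subset_iff) (metis less_eq_real_def)
      also have "\<dots> = ennreal (e * \<bar>p - q\<bar>)" using real by (simp add: ennreal_mult)
      finally have "\<bar>f p - f q\<bar> \<le> e * \<bar>p - q\<bar>" using real by (subst (asm) ennreal_le_iff) auto
      then show ?thesis by (simp add: abs_minus_commute)
    qed
    have D: "(f has_real_derivative deriv f p) (at p)"
      using f_diff p DERIV_deriv_iff_real_differentiable by blast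
    then have lim: "((\<lambda>y. (f y - f p) / (y - p)) \<longlongrightarrow> deriv f p) (at p)"
      by (simp add: has_field_derivative_iff)
    have ev: "eventually (\<lambda>y. e \<ge> (f y - f p) / (y - p)) (at p)"
    proof -
      have "eventually (\<lambda>y. y \<in> S) (at p)"
        using S_open p(1) eventually_at_topological by blast
      moreover have "eventually (\<lambda>y. y \<noteq> p) (at p)" by (simp add: eventually_at_filter)
      ultimately show ?thesis
      proof eventually_elim
        case (elim y)
        have "\<bar>f y - f p\<bar> \<le> e * \<bar>y - p\<bar>" using lip elim by blast
        then have "\<bar>(f y - f p) / (y - p)\<bar> \<le> e" using elim by (simp add: abs_divide divide_le_eq)
        then show ?case by linarith
      qed
    qed
    have "deriv f p \<le> e" by (rule tendsto_upperbound[OF lim ev]) simp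
    then have "C * (f p / p) \<le> e" using Cd p by force
    then show ?thesis using real by (simp add: ennreal_leI)
  qed
  show ?thesis using C main by blast
qed

end
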